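(* Fix a tomographically complete measurement $\mu^\diamond$ on $\mathcal X=\mathbb C^n$ with finite outcome set $\mathcal Y$. For every quantum property $\Gamma:\mathrm{Dens}(\mathcal X)\to\mathcal R$, $\mathrm{elic}_Q(\Gamma)=\mathrm{elic}_{\mathcal P^\diamond}(\Gamma^\diamond)$.
   Context: $\mathrm{Herm}(\mathcal X)$ Hermitian matrices with $\langle X,Y\rangle=\mathrm{Tr}(X^*Y)$; $\mathrm{Dens}(\mathcal X)$ density matrices. A measurement is a family $\{\mu_y\}_{y\in\mathcal Y}$ of positive semidefinite operators summing to $I$; tomographically complete if its real span is $\mathrm{Herm}(\mathcal X)$. $\phi:\mathrm{Herm}(\mathcal X)\to\mathbb R^{\mathcal Y}$, $(\phi X)_y=\langle\mu^\diamond_y,X\rangle$; $\phi^+$ its Moore–Penrose pseudoinverse; $\mathcal P^\diamond=\phi(\mathrm{Dens}(\mathcal X))$; $\Gamma^\diamond(p)=\Gamma(\phi^+p)$ for $p\in\mathcal P^\diamond$. Quantum elicitability: there is a quantum score $S=(s,\mu)$, $s:\mathcal R\times\mathbb N\to\mathbb R$, $\mu(r)$ a measurement, with $\{\Gamma(\rho)\}=\arg\max_r\sum_y\langle\mu(r)_y,\rho\rangle s(r,y)$ for all $\rho$. Classical elicitability on $\mathcal P$: there is $\hat s:\mathcal R\times\mathcal Y\to\mathbb R$ with $\{\Gamma(p)\}=\arg\max_r\sum_yp_y\hat s(r,y)$ for all $p\in\mathcal P$. Quantum identifiability of $\hat\Gamma:\mathrm{Dens}(\mathcal X)\to\mathbb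 R^k$: for each $r$ in the range there is $V(r)\in\mathrm{Herm}(\mathcal X)^k$ with $\hat\Gamma(\rho)=r\iff\langle V(r)_i,\rho\rangle=0\ \forall i$; classical identifiability on $\mathcal P$: for each $r$ there is $v(r)\in\mathbb R^{k\times\mathcal Y}$ with $\hat\Gamma(p)=r\iff v(r)p=0$. $\Gamma$ is $k$-elicitable if there exist an elicitable and identifiable $\hat\Gamma$ with values in $\mathbb R^k$ (on the same domain) and a map $\psi:\mathbb R^k\to\mathcal R$ with $\Gamma=\psi\circ\hat\Gamma$. $\mathrm{elic}_Q(\Gamma)$ (resp. $\mathrm{elic}_{\mathcal P}(\Gamma)$) is the least such $k$ in the quantum (resp. classical, domain $\mathcal P$) sense. *)

theory Defs
  imports "HOL-Analysis.Analysis" "HOL-Library.Extended_Nat"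
begin

text \<open>Operators on X = C^n are matrices complex^'n^'n, with 'n a finite index type.\<close>

definition adj :: "complex^'n^'n \<Rightarrow> complex^'n^'n" where
  "adj A = (\<chi> i j. cnj (A $ j $ i))"

definition hermitian :: "complex^'n^'n \<Rightarrow> bool" where
  "hermitian A \<longleftrightarrow> adj A = A"

text \<open>Hilbert-Schmidt inner product  Tr(X^* Y).\<close>
definition hs_inner :: "complex^'n^'n \<Rightarrow> complex^'n^'n \<Rightarrow> complex" where
  "hs_inner X Y = (\<Sum>i\<in>UNIV. \<Sum>j\<in>UNIV. cnj (X $ j $ i) * Y $ j $ i)"

definition mtrace :: "complex^'n^'n \<Rightarrow> complex" where
  "mtrace A = (\<Sum>i\<in>UNIV. A $ i $ i)"

definition psd :: "complex^'n^'n \<Rightarrow> bool" where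
  "psd A \<longleftrightarrow> hermitian A \<and>
     (\<forall>v::complex^'n. 0 \<le> Re (\<Sum>i\<in>UNIV. \<Sum>j\<in>UNIV. cnj (v $ i) * A $ i $ j * v $ j))"

definition Dens :: "(complex^'n^'n) set" where
  "Dens = {\<rho>. psd \<rho> \<and> mtrace \<rho> = 1}"

definition is_measurement :: "'y set \<Rightarrow> ('y \<Rightarrow> complex^'n^'n) \<Rightarrow> bool" where
  "is_measurement Y \<mu> \<longleftrightarrow> finite Y \<and> (\<forall>y\<in>Y. psd (\<mu> y)) \<and> (\<Sum>y\<in>Y. \<mu> y) = mat 1"

definition tomo_complete :: "('y::finite \<Rightarrow> complex^'n^'n) \<Rightarrow> bool" where
  "tomo_complete \<mu> \<longleftrightarrow>
     {H. hermitian H} = {(\<Sum>y\<in>UNIV. c y *\<^sub>R \<mu> y) | c :: 'y \<Rightarrow> real. True}"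

definition phi :: "('y::finite \<Rightarrow> complex^'n^'n) \<Rightarrow> complex^'n^'n \<Rightarrow> ('y \<Rightarrow> real)" where
  "phi \<mu> X = (\<lambda>y. Re (hs_inner (\<mu> y) X))"

text \<open>Moore-Penrose pseudoinverse of phi : Herm(X) -> R^Y (Hilbert-Schmidt inner product
  on Herm(X), standard Euclidean one on R^Y): the minimum-norm least-squares solution.\<close>
definition residual :: "('y::finite \<Rightarrow> complex^'n^'n) \<Rightarrow> ('y \<Rightarrow> real) \<Rightarrow> complex^'n^'n \<Rightarrow> real" where
  "residual \<mu> p X = (\<Sum>y\<in>UNIV. (phi \<mu> X y - p y)^2)"

definition pinv :: "('y::finite \<Rightarrow> complex^'n^'n) \<Rightarrow> ('y \<Rightarrow> real) \<Rightarrow> complex^'n^'n" where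
  "pinv \<mu> p = (THE X. hermitian X
      \<and> (\<forall>Z. hermitian Z \<longrightarrow> residual \<mu> p X \<le> residual \<mu> p Z)
      \<and> (\<forall>Z. hermitian Z \<and> (\<forall>W. hermitian W \<longrightarrow> residual \<mu> p Z \<le> residual \<mu> p W)
             \<longrightarrow> Re (hs_inner X X) \<le> Re (hs_inner Z Z)))"

definition Pdia :: "('y::finite \<Rightarrow> complex^'n^'n) \<Rightarrow> ('y \<Rightarrow> real) set" where
  "Pdia \<mu> = phi \<mu> ` Dens"

definition Gamma_dia :: "('y::finite \<Rightarrow> complex^'n^'n) \<Rightarrow> (complex^'n^'n \<Rightarrow> 'r) \<Rightarrow> ('y \<Rightarrow> real) \<Rightarrow> 'r" where
  "Gamma_dia \<mu> \<Gamma> p = \<Gamma> (pinv \<mu> p)"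

text \<open>Quantum scores: s : R x nat -> real, and for every report r a measurement mu r with
  finitely many (nonzero) outcomes in nat.\<close>
definition qscore :: "('a \<Rightarrow> nat \<Rightarrow> real) \<Rightarrow> ('a \<Rightarrow> nat \<Rightarrow> complex^'n^'n) \<Rightarrow> 'a \<Rightarrow> complex^'n^'n \<Rightarrow> real" where
  "qscore s \<mu> r \<rho> = (\<Sum>y\<in>{y. \<mu> r y \<noteq> 0}. Re (hs_inner (\<mu> r y) \<rho>) * s r y)"

definition q_elicitable :: "'a set \<Rightarrow> (complex^'n^'n \<Rightarrow> 'a) \<Rightarrow> bool" where
  "q_elicitable R \<Gamma> \<longleftrightarrow> (\<exists>(s :: 'a \<Rightarrow> nat \<Rightarrow> real) (\<mu> :: 'a \<Rightarrow> nat \<Rightarrow> complex^'n^'n).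
      (\<forall>r\<in>R. is_measurement {y. \<mu> r y \<noteq> 0} (\<mu> r)) \<and>
      (\<forall>\<rho>\<in>Dens. {\<Gamma> \<rho>} = {r\<in>R. \<forall>r'\<in>R. qscore s \<mu> r' \<rho> \<le> qscore s \<mu> r \<rho>}))"

definition c_elicitable :: "('y::finite \<Rightarrow> real) set \<Rightarrow> 'a set \<Rightarrow> (('y \<Rightarrow> real) \<Rightarrow> 'a) \<Rightarrow> bool" where
  "c_elicitable P R \<Gamma> \<longleftrightarrow> (\<exists>s :: 'a \<Rightarrow> 'y \<Rightarrow> real.
      \<forall>p\<in>P. {\<Gamma> p} = {r\<in>R. \<forall>r'\<in>R. (\<Sum>y\<in>UNIV. p y * s r' y) \<le> (\<Sum>y\<in>UNIV. p y * s r y)})"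

text \<open>R^k, represented as real sequences vanishing from index k on.\<close>
definition Rk :: "nat \<Rightarrow> (nat \<Rightarrow> real) set" where
  "Rk k = {x. \<forall>i\<ge>k. x i = 0}"

definition q_identifiable :: "nat \<Rightarrow> (complex^'n^'n \<Rightarrow> (nat \<Rightarrow> real)) \<Rightarrow> bool" where
  "q_identifiable k \<Gamma> \<longleftrightarrow> (\<forall>r\<in>\<Gamma> ` Dens. \<exists>V :: nat \<Rightarrow> complex^'n^'n.
      (\<forall>i<k. hermitian (V i)) \<and>
      (\<forall>\<rho>\<in>Dens. \<Gamma> \<rho> = r \<longleftrightarrow> (\<forall>i<k. hs_inner (V i) \<rho> = 0)))"

definition c_identifiable :: "('y::finite \<Rightarrow> real) set \<Rightarrow> nat \<Rightarrow> (('y \<Rightarrow> real) \<Rightarrow> (nat \<Rightarrow> real)) \<Rightarrow> bool" where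
  "c_identifiable P k \<Gamma> \<longleftrightarrow> (\<forall>r\<in>\<Gamma> ` P. \<exists>v :: nat \<Rightarrow> 'y \<Rightarrow> real.
      \<forall>p\<in>P. \<Gamma> p = r \<longleftrightarrow> (\<forall>i<k. (\<Sum>y\<in>UNIV. v i y * p y) = 0))"

definition q_k_elicitable :: "nat \<Rightarrow> (complex^'n^'n \<Rightarrow> 'r) \<Rightarrow> bool" where
  "q_k_elicitable k \<Gamma> \<longleftrightarrow> (\<exists>(\<Gamma>h :: complex^'n^'n \<Rightarrow> (nat \<Rightarrow> real)) (\<psi> :: (nat \<Rightarrow> real) \<Rightarrow> 'r).
      (\<forall>\<rho>\<in>Dens. \<Gamma>h \<rho> \<in> Rk k) \<and> q_elicitable (Rk k) \<Gamma>h \<and> q_identifiable k \<Gamma>h \<and>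
      (\<forall>\<rho>\<in>Dens. \<Gamma> \<rho> = \<psi> (\<Gamma>h \<rho>)))"

definition c_k_elicitable :: "('y::finite \<Rightarrow> real) set \<Rightarrow> nat \<Rightarrow> (('y \<Rightarrow> real) \<Rightarrow> 'r) \<Rightarrow> bool" where
  "c_k_elicitable P k \<Gamma> \<longleftrightarrow> (\<exists>(\<Gamma>h :: ('y \<Rightarrow> real) \<Rightarrow> (nat \<Rightarrow> real)) (\<psi> :: (nat \<Rightarrow> real) \<Rightarrow> 'r).
      (\<forall>p\<in>P. \<Gamma>h p \<in> Rk k) \<and> c_elicitable P (Rk k) \<Gamma>h \<and> c_identifiable P k \<Gamma>h \<and>
      (\<forall>p\<in>P. \<Gamma> p = \<psi> (\<Gamma>h p)))"

text \<open>Least such k; infinity if there is none.\<close>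
definition elic_Q :: "(complex^'n^'n \<Rightarrow> 'r) \<Rightarrow> enat" where
  "elic_Q \<Gamma> = Inf {enat k | k. q_k_elicitable k \<Gamma>}"

definition elic_C :: "('y::finite \<Rightarrow> real) set \<Rightarrow> (('y \<Rightarrow> real) \<Rightarrow> 'r) \<Rightarrow> enat" where
  "elic_C P \<Gamma> = Inf {enat k | k. c_k_elicitable P k \<Gamma>}"

end

theory Submission
  imports Defs
begin

lemma adj_add: "adj (A + B) = adj A + adj B"
  by (simp add: adj_def vec_eq_iff)
lemma adj_scaleR: "adj (c *\<^sub>R A) = c *\<^sub>R adj A"
proof -
  have "cnj (c *\<^sub>R z) = c *\<^sub>R cnj z" for z :: complex
    by (simp add: complex_eq_iff)
  then show ?thesis by (simp add: adj_def vec_eq_iff)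
qed
lemma adj_zero: "adj 0 = 0"
  by (simp add: adj_def vec_eq_iff)

lemma hermitian_sum: "(\<And>x. x \<in> A \<Longrightarrow> hermitian (f x)) \<Longrightarrow> hermitian (sum f A)"
proof (induction A rule: infinite_finite_induct)
  case (infinite A) then show ?case by (simp add: hermitian_def adj_zero)
next
  case empty then show ?case by (simp add: hermitian_def adj_zero)
next
  case (insert x F) then show ?case by (simp add: hermitian_def adj_add)
qed

lemma hermitian_scaleR: "hermitian A \<Longrightarrow> hermitian (c *\<^sub>R A)"
  by (simp add: hermitian_def adj_scaleR)

lemma hermitian_diff: "hermitian A \<Longrightarrow> hermitian B \<Longrightarrow> hermitian (A - B)"
  by (simp add: hermitian_def adj_def vec_eq_iff)

lemma hs_inner_add_left: "hs_inner (A + B) X = hs_inner A X + hs_inner B X"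
  by (simp add: hs_inner_def distrib_right sum.distrib)
lemma hs_inner_zero_left: "hs_inner 0 X = 0"
  by (simp add: hs_inner_def)
lemma hs_inner_scaleR_left: "hs_inner (c *\<^sub>R A) X = of_real c * hs_inner A X"
proof -
  have "(c *\<^sub>R A) $ j $ i = of_real c * A $ j $ i" for i j
    by (metis scaleR_conv_of_real vector_scaleR_component)
  then show ?thesis by (simp add: hs_inner_def sum_distrib_left mult.assoc)
qed
lemma hs_inner_diff_right: "hs_inner A (X - Y) = hs_inner A X - hs_inner A Y"
  by (simp add: hs_inner_def right_diff_distrib sum_subtractf)

lemma hs_inner_sum_left: "hs_inner (sum f A) X = (\<Sum>y\<in>A. hs_inner (f y) X)"
proof (induction A rule: infinite_finite_induct)
  case (infinite A) then show ?case by (simp add: hs_inner_zero_left)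
next
  case empty then show ?case by (simp add: hs_inner_zero_left)
next
  case (insert x F) then show ?case by (simp add: hs_inner_add_left)
qed

lemma hs_inner_herm_cnj:
  assumes "hermitian A" "hermitian B"
  shows "cnj (hs_inner A B) = hs_inner A B"
proof -
  have hA: "A $ j $ i = cnj (A $ i $ j)" for i j
  proof -
    have "A $ j $ i = adj A $ j $ i" using assms(1) by (simp add: hermitian_def)
    then show ?thesis by (simp add: adj_def)
  qed
  have hB: "B $ j $ i = cnj (B $ i $ j)" for i j
  proof -
    have "B $ j $ i = adj B $ j $ i" using assms(2) by (simp add: hermitian_def)
    then show ?thesis by (simp add: adj_def)
  qed
  have "cnj (hs_inner A B) = (\<Sum>i\<in>UNIV. \<Sum>j\<in>UNIV. A $ j $ i * cnj (B $ j $ i))"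
    by (simp add: hs_inner_def)
  also have "\<dots> = (\<Sum>i\<in>UNIV. \<Sum>j\<in>UNIV. cnj (A $ i $ j) * B $ i $ j)"
    by (subst hA, subst hB, simp)
  also have "\<dots> = hs_inner A B"
    unfolding hs_inner_def by (rule sum.swap)
  finally show ?thesis .
qed

lemma hs_inner_herm_real:
  assumes "hermitian A" "hermitian B"
  shows "hs_inner A B = of_real (Re (hs_inner A B))"
  using hs_inner_herm_cnj[OF assms] by (metis Reals_cnj_iff Re_complex_of_real Reals_cases)

lemma hs_inner_self_zero:
  assumes "Re (hs_inner X X) = 0" shows "X = 0"
proof -
  have e: "Re (hs_inner X X) = (\<Sum>i\<in>UNIV. \<Sum>j\<in>UNIV. (Re (X $ j $ i))^2 + (Im (X $ j $ i))^2)"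
    by (simp add: hs_inner_def Re_sum power2_eq_square)
  have "\<forall>i\<in>UNIV. (\<Sum>j\<in>UNIV. (Re (X $ j $ i))^2 + (Im (X $ j $ i))^2) = 0"
    using assms e by (subst sum_nonneg_eq_0_iff[symmetric]) (auto intro: sum_nonneg)
  then have "\<forall>i j. (Re (X $ j $ i))^2 + (Im (X $ j $ i))^2 = 0"
    by (simp add: sum_nonneg_eq_0_iff)
  then show ?thesis by (simp add: vec_eq_iff complex_eq_iff)
qed

lemma herm_mu: "is_measurement UNIV \<mu> \<Longrightarrow> hermitian (\<mu> y)"
  by (simp add: is_measurement_def psd_def)

lemma dens_herm: "\<rho> \<in> Dens \<Longrightarrow> hermitian \<rho>"
  by (simp add: Dens_def psd_def)

lemma tc_repr: "tomo_complete \<mu> \<Longrightarrow> hermitian H \<Longrightarrow> \<exists>c. H = (\<Sum>y\<in>UNIV. c y *\<^sub>R \<mu> y)"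
  unfolding tomo_complete_def by blast

lemma tc_herm: "tomo_complete \<mu> \<Longrightarrow> hermitian (\<Sum>y\<in>UNIV. c y *\<^sub>R \<mu> y)"
  unfolding tomo_complete_def by blast

lemma hs_inner_comb: "hs_inner (\<Sum>y\<in>A. c y *\<^sub>R \<mu> y) X = (\<Sum>y\<in>A. of_real (c y) * hs_inner (\<mu> y) X)"
  by (simp add: hs_inner_sum_left hs_inner_scaleR_left)

lemma comb_real:
  assumes "is_measurement UNIV \<mu>" "hermitian \<rho>"
  shows "hs_inner (\<Sum>y\<in>UNIV. c y *\<^sub>R \<mu> y) \<rho> = of_real (\<Sum>y\<in>UNIV. c y * phi \<mu> \<rho> y)"
proof -
  have "hs_inner (\<mu> y) \<rho> = of_real (phi \<mu> \<rho> y)" for y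
    unfolding phi_def using hs_inner_herm_real[OF herm_mu[OF assms(1)] assms(2)] .
  then show ?thesis by (simp add: hs_inner_comb)
qed

lemma phi_inj:
  assumes "tomo_complete \<mu>" "hermitian X" "hermitian Y" "phi \<mu> X = phi \<mu> Y"
  shows "X = Y"
proof -
  have hD: "hermitian (X - Y)" using assms by (simp add: hermitian_diff)
  obtain c where c: "X - Y = (\<Sum>y\<in>UNIV. c y *\<^sub>R \<mu> y)" using tc_repr[OF assms(1) hD] by blast
  have z: "Re (hs_inner (\<mu> y) (X - Y)) = 0" for y
    using fun_cong[OF assms(4), of y] by (simp add: phi_def hs_inner_diff_right)
  have "Re (hs_inner (X - Y) (X - Y)) = 0"
    apply (subst (1) c) by (simp add: hs_inner_comb Re_sum z)
  then have "X - Y = 0" by (rule hs_inner_self_zero)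
  then show ?thesis by simp
qed

lemma residual_nonneg: "0 \<le> residual \<mu> p X"
  by (simp add: residual_def sum_nonneg)

lemma residual_self: "residual \<mu> (phi \<mu> X) X = 0"
  by (simp add: residual_def)

lemma residual_le0: "residual \<mu> p X \<le> 0 \<Longrightarrow> phi \<mu> X = p"
proof -
  assume a: "residual \<mu> p X \<le> 0"
  have "residual \<mu> p X = 0" using a residual_nonneg[of \<mu> p X] by simp
  then have "\<forall>y\<in>UNIV. (phi \<mu> X y - p y)^2 = 0"
    unfolding residual_def by (subst sum_nonneg_eq_0_iff[symmetric]) auto
  then show ?thesis by auto
qed

lemma pinv_phi:
  assumes tc: "tomo_complete \<mu>" and h: "hermitian \<rho>"
  shows "pinv \<mu> (phi \<mu> \<rho>) = \<rho>"
proof -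
  have uniq: "Z = \<rho>" if "hermitian Z" "residual \<mu> (phi \<mu> \<rho>) Z \<le> residual \<mu> (phi \<mu> \<rho>) \<rho>" for Z
    using residual_le0[of \<mu> "phi \<mu> \<rho>" Z] that residual_self[of \<mu> \<rho>] phi_inj[OF tc that(1) h] by simp
  show ?thesis
    unfolding pinv_def
  proof (rule the_equality)
    show "hermitian \<rho> \<and>
    (\<forall>Z. hermitian Z \<longrightarrow> residual \<mu> (phi \<mu> \<rho>) \<rho> \<le> residual \<mu> (phi \<mu> \<rho>) Z) \<and>
    (\<forall>Z. hermitian Z \<and> (\<forall>W. hermitian W \<longrightarrow> residual \<mu> (phi \<mu> \<rho>) Z \<le> residual \<mu> (phi \<mu> \<rho>) W) \<longrightarrow>
         Re (hs_inner \<rho> \<rho>) \<le> Re (hs_inner Z Z))"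
      using h residual_self[of \<mu> \<rho>] residual_nonneg uniq h by (metis order.refl)
  next
    fix X assume "hermitian X \<and>
    (\<forall>Z. hermitian Z \<longrightarrow> residual \<mu> (phi \<mu> \<rho>) X \<le> residual \<mu> (phi \<mu> \<rho>) Z) \<and>
    (\<forall>Z. hermitian Z \<and> (\<forall>W. hermitian W \<longrightarrow> residual \<mu> (phi \<mu> \<rho>) Z \<le> residual \<mu> (phi \<mu> \<rho>) W) \<longrightarrow>
         Re (hs_inner X X) \<le> Re (hs_inner Z Z))"
    then show "X = \<rho>" using uniq h by blast
  qed
qed

lemma sum_supp:
  fixes Q :: "nat \<Rightarrow> 'a::zero" and h :: "nat \<Rightarrow> 'b::comm_monoid_add"
  assumes "{n. Q n \<noteq> 0} \<subseteq> range (to_nat::'y::finite\<Rightarrow>nat)" "\<And>n. Q n = 0 \<Longrightarrow> h n = 0"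
  shows "(\<Sum>n\<in>{n. Q n \<noteq> 0}. h n) = (\<Sum>y\<in>(UNIV::'y set). h (to_nat y))"
proof -
  have "(\<Sum>n\<in>{n. Q n \<noteq> 0}. h n) = (\<Sum>n\<in>range (to_nat::'y\<Rightarrow>nat). h n)"
    by (rule sum.mono_neutral_left) (use assms in auto)
  also have "\<dots> = (\<Sum>y\<in>(UNIV::'y set). h (to_nat y))"
    by (subst sum.reindex) auto
  finally show ?thesis .
qed

lemma q_to_c:
  fixes \<mu> :: "'y::finite \<Rightarrow> complex^'n^'n" and \<Gamma> :: "complex^'n^'n \<Rightarrow> 'r"
  assumes meas: "is_measurement UNIV \<mu>" and tc: "tomo_complete \<mu>"
    and q: "q_k_elicitable k \<Gamma>"
  shows "c_k_elicitable (Pdia \<mu>) k (Gamma_dia \<mu> \<Gamma>)"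
proof -
  obtain \<Gamma>h :: "complex^'n^'n \<Rightarrow> (nat \<Rightarrow> real)" and \<psi> where rk: "\<forall>\<rho>\<in>Dens. \<Gamma>h \<rho> \<in> Rk k"
    and el: "q_elicitable (Rk k) \<Gamma>h" and idf: "q_identifiable k \<Gamma>h"
    and ps: "\<forall>\<rho>\<in>Dens. \<Gamma> \<rho> = \<psi> (\<Gamma>h \<rho>)"
    using q unfolding q_k_elicitable_def by blast
  define G where "G p = \<Gamma>h (pinv \<mu> p)" for p
  have Gphi: "G (phi \<mu> \<rho>) = \<Gamma>h \<rho>" if "\<rho> \<in> Dens" for \<rho>
    using pinv_phi[OF tc dens_herm[OF that]] by (simp add: G_def)
  have P1: "\<forall>p\<in>Pdia \<mu>. G p \<in> Rk k" using rk Gphi by (auto simp: Pdia_def)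
  have P2: "\<forall>p\<in>Pdia \<mu>. Gamma_dia \<mu> \<Gamma> p = \<psi> (G p)"
    using ps Gphi pinv_phi[OF tc dens_herm] by (auto simp: Pdia_def Gamma_dia_def)
  have P3: "c_elicitable (Pdia \<mu>) (Rk k) G"
  proof -
    obtain s :: "(nat \<Rightarrow> real) \<Rightarrow> nat \<Rightarrow> real" and \<mu>' :: "(nat \<Rightarrow> real) \<Rightarrow> nat \<Rightarrow> complex^'n^'n"
      where m: "\<forall>r\<in>Rk k. is_measurement {y. \<mu>' r y \<noteq> 0} (\<mu>' r)"
      and a: "\<forall>\<rho>\<in>Dens. {\<Gamma>h \<rho>} = {r\<in>Rk k. \<forall>r'\<in>Rk k. qscore s \<mu>' r' \<rho> \<le> qscore s \<mu>' r \<rho>}"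
      using el unfolding q_elicitable_def by blast
    define M where "M r = (\<Sum>n\<in>{y. \<mu>' r y \<noteq> 0}. s r n *\<^sub>R \<mu>' r n)" for r
    have herm: "hermitian (M r)" if "r \<in> Rk k" for r
      unfolding M_def using m that
      by (intro hermitian_sum hermitian_scaleR) (auto simp: is_measurement_def psd_def)
    define sh where "sh r = (SOME c. M r = (\<Sum>y\<in>UNIV. c y *\<^sub>R \<mu> y))" for r
    have shr: "M r = (\<Sum>y\<in>UNIV. sh r y *\<^sub>R \<mu> y)" if "r \<in> Rk k" for r
      unfolding sh_def using tc_repr[OF tc herm[OF that]] by (rule someI_ex)
    have qs: "qscore s \<mu>' r \<rho> = Re (hs_inner (M r) \<rho>)" for r \<rho>
      by (simp add: qscore_def M_def hs_inner_sum_left hs_inner_scaleR_left Re_sum mult.commute)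
    have qs2: "qscore s \<mu>' r \<rho> = (\<Sum>y\<in>UNIV. phi \<mu> \<rho> y * sh r y)" if "r \<in> Rk k" for r \<rho>
      unfolding qs shr[OF that] by (simp add: hs_inner_comb Re_sum phi_def mult.commute)
    show ?thesis unfolding c_elicitable_def
    proof (intro exI[of _ sh] ballI)
      fix p assume "p \<in> Pdia \<mu>"
      then obtain \<rho> where \<rho>: "\<rho> \<in> Dens" "p = phi \<mu> \<rho>" by (auto simp: Pdia_def)
      have "{G p} = {\<Gamma>h \<rho>}" using Gphi \<rho> by simp
      also have "\<dots> = {r\<in>Rk k. \<forall>r'\<in>Rk k. qscore s \<mu>' r' \<rho> \<le> qscore s \<mu>' r \<rho>}" using a \<rho> by blast
      also have "\<dots> = {r\<in>Rk k. \<forall>r'\<in>Rk k. (\<Sum>y\<in>UNIV. p y * sh r' y) \<le> (\<Sum>y\<in>UNIV. p y * sh r y)}"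
        using qs2 \<rho>(2) by auto
      finally show "{G p} = {r\<in>Rk k. \<forall>r'\<in>Rk k. (\<Sum>y\<in>UNIV. p y * sh r' y) \<le> (\<Sum>y\<in>UNIV. p y * sh r y)}" .
    qed
  qed
  have P4: "c_identifiable (Pdia \<mu>) k G"
    unfolding c_identifiable_def
  proof
    fix r assume "r \<in> G ` Pdia \<mu>"
    then have "r \<in> \<Gamma>h ` Dens" using Gphi by (auto simp: Pdia_def)
    then obtain V where hV: "\<forall>i<k. hermitian (V i)"
      and V: "\<forall>\<rho>\<in>Dens. \<Gamma>h \<rho> = r \<longleftrightarrow> (\<forall>i<k. hs_inner (V i) \<rho> = 0)"
      using idf unfolding q_identifiable_def by blast
    define v where "v i = (SOME c. V i = (\<Sum>y\<in>UNIV. c y *\<^sub>R \<mu> y))" for i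
    have vr: "V i = (\<Sum>y\<in>UNIV. v i y *\<^sub>R \<mu> y)" if "i < k" for i
    proof -
      have "hermitian (V i)" using hV that by simp
      from tc_repr[OF tc this] show ?thesis unfolding v_def by (rule someI_ex)
    qed
    show "\<exists>v :: nat \<Rightarrow> 'y \<Rightarrow> real. \<forall>p\<in>Pdia \<mu>. G p = r \<longleftrightarrow> (\<forall>i<k. (\<Sum>y\<in>UNIV. v i y * p y) = 0)"
    proof (intro exI[of _ v] ballI)
      fix p assume "p \<in> Pdia \<mu>"
      then obtain \<rho> where \<rho>: "\<rho> \<in> Dens" "p = phi \<mu> \<rho>" by (auto simp: Pdia_def)
      have e: "hs_inner (V i) \<rho> = of_real (\<Sum>y\<in>UNIV. v i y * p y)" if "i < k" for i
        unfolding vr[OF that] comb_real[OF meas dens_herm[OF \<rho>(1)]] \<rho>(2) by (rule refl)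
      have "G p = r \<longleftrightarrow> (\<forall>i<k. hs_inner (V i) \<rho> = 0)"
        using bspec[OF V \<rho>(1)] Gphi[OF \<rho>(1)] \<rho>(2) by simp
      also have "\<dots> \<longleftrightarrow> (\<forall>i<k. (\<Sum>y\<in>UNIV. v i y * p y) = 0)"
        using e by (simp del: of_real_sum)
      finally show "G p = r \<longleftrightarrow> (\<forall>i<k. (\<Sum>y\<in>UNIV. v i y * p y) = 0)" .
    qed
  qed
  show ?thesis unfolding c_k_elicitable_def
    by (intro exI[of _ G] exI[of _ \<psi>] conjI P1 P2 P3 P4)
qed

lemma c_to_q:
  fixes \<mu> :: "'y::finite \<Rightarrow> complex^'n^'n" and \<Gamma> :: "complex^'n^'n \<Rightarrow> 'r"
  assumes meas: "is_measurement UNIV \<mu>" and tc: "tomo_complete \<mu>"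
    and c: "c_k_elicitable (Pdia \<mu>) k (Gamma_dia \<mu> \<Gamma>)"
  shows "q_k_elicitable k \<Gamma>"
proof -
  obtain \<Gamma>h :: "('y \<Rightarrow> real) \<Rightarrow> (nat \<Rightarrow> real)" and \<psi> where rk: "\<forall>p\<in>Pdia \<mu>. \<Gamma>h p \<in> Rk k"
    and el: "c_elicitable (Pdia \<mu>) (Rk k) \<Gamma>h" and idf: "c_identifiable (Pdia \<mu>) k \<Gamma>h"
    and ps: "\<forall>p\<in>Pdia \<mu>. Gamma_dia \<mu> \<Gamma> p = \<psi> (\<Gamma>h p)"
    using c unfolding c_k_elicitable_def by blast
  define G where "G \<rho> = \<Gamma>h (phi \<mu> \<rho>)" for \<rho>
  have inP: "phi \<mu> \<rho> \<in> Pdia \<mu>" if "\<rho> \<in> Dens" for \<rho> using that by (simp add: Pdia_def)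
  have P1: "\<forall>\<rho>\<in>Dens. G \<rho> \<in> Rk k" using rk inP by (simp add: G_def)
  have P2: "\<forall>\<rho>\<in>Dens. \<Gamma> \<rho> = \<psi> (G \<rho>)"
  proof
    fix \<rho> :: "complex^'n^'n" assume \<rho>: "\<rho> \<in> Dens"
    have "Gamma_dia \<mu> \<Gamma> (phi \<mu> \<rho>) = \<psi> (\<Gamma>h (phi \<mu> \<rho>))" using ps inP[OF \<rho>] by blast
    then show "\<Gamma> \<rho> = \<psi> (G \<rho>)"
      by (simp add: G_def Gamma_dia_def pinv_phi[OF tc dens_herm[OF \<rho>]])
  qed
  have P3: "q_elicitable (Rk k) G"
  proof -
    obtain s :: "(nat \<Rightarrow> real) \<Rightarrow> 'y \<Rightarrow> real" where
      a: "\<forall>p\<in>Pdia \<mu>. {\<Gamma>h p} = {r\<in>Rk k. \<forall>r'\<in>Rk k. (\<Sum>y\<in>UNIV. p y * s r' y) \<le> (\<Sum>y\<in>UNIV. p y * s r y)}"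
      using el unfolding c_elicitable_def by blast
    define \<mu>q where "\<mu>q (r::nat\<Rightarrow>real) n = (if n \<in> range (to_nat::'y\<Rightarrow>nat) then \<mu> (from_nat n) else 0)" for r n
    define sq where "sq r n = s r (from_nat n)" for r n
    have sub: "{n. \<mu>q r n \<noteq> 0} \<subseteq> range (to_nat::'y\<Rightarrow>nat)" for r
      by (auto simp: \<mu>q_def split: if_splits)
    have mq: "\<mu>q r (to_nat y) = \<mu> y" for r y by (simp add: \<mu>q_def)
    have ism: "is_measurement {n. \<mu>q r n \<noteq> 0} (\<mu>q r)" for r
    proof -
      have "finite {n. \<mu>q r n \<noteq> 0}" by (rule finite_subset[OF sub[of r]]) simp
      moreover have "\<forall>n\<in>{n. \<mu>q r n \<noteq> 0}. psd (\<mu>q r n)"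
      proof
        fix n assume "n \<in> {n. \<mu>q r n \<noteq> 0}"
        then have "n \<in> range (to_nat::'y\<Rightarrow>nat)" using sub[of r] by blast
        then obtain y :: 'y where "n = to_nat y" by blast
        then show "psd (\<mu>q r n)" using meas by (simp add: mq is_measurement_def)
      qed
      moreover have "(\<Sum>n\<in>{n. \<mu>q r n \<noteq> 0}. \<mu>q r n) = (\<Sum>y\<in>UNIV. \<mu>q r (to_nat (y::'y)))"
        by (rule sum_supp[OF sub[of r]])
      moreover have "(\<Sum>y\<in>UNIV. \<mu>q r (to_nat (y::'y))) = mat 1"
        using meas by (simp add: mq is_measurement_def)
      ultimately show ?thesis by (simp add: is_measurement_def)
    qed
    have qs: "qscore sq \<mu>q r \<rho> = (\<Sum>y\<in>UNIV. phi \<mu> \<rho> y * s r y)" for r \<rho>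
      unfolding qscore_def
      by (subst sum_supp[OF sub[of r]]) (auto simp: hs_inner_zero_left mq sq_def phi_def mult.commute)
    show ?thesis unfolding q_elicitable_def
    proof (intro exI[of _ sq] exI[of _ \<mu>q] conjI ballI)
      fix r show "is_measurement {y. \<mu>q r y \<noteq> 0} (\<mu>q r)" by (rule ism)
    next
      fix \<rho> :: "complex^'n^'n" assume \<rho>: "\<rho> \<in> Dens"
      show "{G \<rho>} = {r\<in>Rk k. \<forall>r'\<in>Rk k. qscore sq \<mu>q r' \<rho> \<le> qscore sq \<mu>q r \<rho>}"
        unfolding qs G_def using bspec[OF a inP[OF \<rho>]] by simp
    qed
  qed
  have P4: "q_identifiable k G"
    unfolding q_identifiable_def
  proof
    fix r assume "r \<in> G ` Dens"
    then have "r \<in> \<Gamma>h ` Pdia \<mu>" using inP by (auto simp: G_def)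
    then obtain v :: "nat \<Rightarrow> 'y \<Rightarrow> real" where
      v: "\<forall>p\<in>Pdia \<mu>. \<Gamma>h p = r \<longleftrightarrow> (\<forall>i<k. (\<Sum>y\<in>UNIV. v i y * p y) = 0)"
      using idf unfolding c_identifiable_def by blast
    define V where "V i = (\<Sum>y\<in>UNIV. v i y *\<^sub>R \<mu> y)" for i
    show "\<exists>V :: nat \<Rightarrow> complex^'n^'n. (\<forall>i<k. hermitian (V i)) \<and>
      (\<forall>\<rho>\<in>Dens. G \<rho> = r \<longleftrightarrow> (\<forall>i<k. hs_inner (V i) \<rho> = 0))"
    proof (intro exI[of _ V] conjI allI impI ballI)
      fix i show "hermitian (V i)" unfolding V_def by (rule tc_herm[OF tc])
    next
      fix \<rho> :: "complex^'n^'n" assume \<rho>: "\<rho> \<in> Dens"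
      have e: "hs_inner (V i) \<rho> = of_real (\<Sum>y\<in>UNIV. v i y * phi \<mu> \<rho> y)" for i
        unfolding V_def by (rule comb_real[OF meas dens_herm[OF \<rho>]])
      show "G \<rho> = r \<longleftrightarrow> (\<forall>i<k. hs_inner (V i) \<rho> = 0)"
        unfolding e G_def of_real_eq_0_iff using bspec[OF v inP[OF \<rho>]] by blast
    qed
  qed
  show ?thesis unfolding q_k_elicitable_def
    by (intro exI[of _ G] exI[of _ \<psi>] conjI P1 P2 P3 P4)
qed

theorem corollary6p3:
  fixes \<mu> :: "'y::finite \<Rightarrow> complex^'n^'n" and \<Gamma> :: "complex^'n^'n \<Rightarrow> 'r"
  assumes "is_measurement UNIV \<mu>" and "tomo_complete \<mu>"
  shows "elic_Q \<Gamma> = elic_C (Pdia \<mu>) (Gamma_dia \<mu> \<Gamma>)"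
proof -
  have "\<And>k. q_k_elicitable k \<Gamma> \<longleftrightarrow> c_k_elicitable (Pdia \<mu>) k (Gamma_dia \<mu> \<Gamma>)"
    using q_to_c[OF assms] c_to_q[OF assms] by blast
  then show ?thesis unfolding elic_Q_def elic_C_def by simp
qed

end
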